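(* Let $\gamma>1$ and $\alpha^2>0$ be constants and $P=\mathrm{diag}(\alpha^2,\tfrac{\gamma-1}{2},\tfrac{\gamma-1}{2},1)$. On a rectangular grid with nodes $(x_i,y_j)$, $i=1,\dots,N$, $j=1,\dots,M$, let $D_x=P_x^{-1}Q_x$ ($N\times N$) and $D_y=P_y^{-1}Q_y$ ($M\times M$) be one-dimensional summation-by-parts (SBP) operators, i.e. $P_x,P_y$ are diagonal positive definite and $Q_x+Q_x^T=B_x:=\mathrm{diag}(-1,0,\dots,0,1)$, $Q_y+Q_y^T=B_y:=\mathrm{diag}(-1,0,\dots,0,1)$. Set $\mathbf{D_x}=I_4\otimes D_x\otimes I_M$, $\mathbf{D_y}=I_4\otimes I_N\otimes D_y$, $\tilde{\mathbf P}=I_4\otimes P_x\otimes P_y$, $\mathbf P=P\otimes I_N\otimes I_M$, $\mathbf{B_x}=I_4\otimes B_x\otimes P_y$, $\mathbf{B_y}=I_4\otimes P_x\otimes B_y$. Let $\vec\Phi(t)=(\vec\Phi_1^T,\dots,\vec\Phi_4^T)^T\in\mathbb{R}^{4NM}$, where $\vec\Phi_k$ collects nodal values approximating $\phi_k$ and the entries of $\vec\Phi_1$ are nonzero. For a $4\times4$ matrix function $A$ of the nodal values of $\Phi=(\phi_1,\dots,\phi_4)$ with entries $a_{kl}$, let $\mathbf A$ denote the $4NM\times4NM$ block matrix whose $(k,l)$ block is $\mathrm{diag}\big(a_{kl}(x_1,y_1),\dots,a_{kl}(x_N,y_M)\big)$ (nodal values, in the same ordering as $\vec\Phi_k$). Apply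 this with $u=\phi_2/\phi_1$, $v=\phi_3/\phi_1$ to $$A_1=\frac12\begin{bmatrix}u&0&0&0\\0&u&0&0\\0&0&u&0\\0&2(\gamma-1)\frac{\phi_4}{\phi_1}&0&(2-\gamma)u\end{bmatrix},\quad A_2=\frac12\begin{bmatrix}u&0&0&0\\0&u&0&4\frac{\phi_4}{\phi_1}\\0&0&u&0\\0&0&0&(2-\gamma)u\end{bmatrix},$$ $$B_1=\frac12\begin{bmatrix}v&0&0&0\\0&v&0&0\\0&0&v&0\\0&0&2(\gamma-1)\frac{\phi_4}{\phi_1}&(2-\gamma)v\end{bmatrix},\quad B_2=\frac12\begin{bmatrix}v&0&0&0\\0&v&0&0\\0&0&v&4\frac{\phi_4}{\phi_1}\\0&0&0&(2-\gamma)v\end{bmatrix},$$ obtaining $\mathbf{A_1},\mathbf{A_2},\mathbf{B_1},\mathbf{B_2}$. If $\vec\Phi$ is a differentiable solution of the semi-discrete scheme $$\vec\Phi_t+\mathbf{D_x}(\mathbf{A_1}\vec\Phi)+\mathbf{A_2}\mathbf{D_x}\vec\Phi+\mathbf{D_y}(\mathbf{B_1}\vec\Phi)+\mathbf{B_2}\mathbf{D_y}\vec\Phi=0,$$ then, with $\tilde{\mathbf A}=2\mathbf P\mathbf{A_1}$ and $\tilde{\mathbf B}=2\mathbf P\mathbf{B_1}$, $$\frac{d}{dt}\,\vec\Phi^T(\mathbf P\tilde{\mathbf P})\vec\Phi+\vec\Phi^T\big(\mathbf{B_x}\tilde{\mathbf A}+\mathbf{B_y}\tilde{\mathbf B}\big)\vec\Phi=0,$$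 i.e. the discrete energy $\vec\Phi^T(\mathbf P\tilde{\mathbf P})\vec\Phi$ changes only through boundary terms.
   Context: The variables $\phi_1,\phi_2,\phi_3,\phi_4$ correspond to $\sqrt{\rho},\sqrt{\rho}u,\sqrt{\rho}v,\sqrt{p}$ for the compressible Euler equations with density $\rho$, velocities $u,v$, pressure $p$, and ratio of specific heats $\gamma$. $\otimes$ denotes the Kronecker product and $I_k$ the $k\times k$ identity. *)

theory Defs
  imports Complex_Main
begin

text \<open>A square matrix of size n is a function nat => nat => real,
only its entries with indices below n matter.  The state vector in R^(4NM) is
indexed by triples (k,i,j) with k<4, i<N, j<M, in lexicographic order
(component k, then x-node i, then y-node j), so that the Kronecker product
C1 (x) C2 (x) C3 has entry C1 k k' * C2 i i' * C3 j j' at ((k,i,j),(k',i',j')).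
All indices are 0-based.\<close>

type_synonym sqmat = "nat \<Rightarrow> nat \<Rightarrow> real"
type_synonym bidx = "nat \<times> nat \<times> nat"
type_synonym bmat = "bidx \<Rightarrow> bidx \<Rightarrow> real"
type_synonym bvec = "bidx \<Rightarrow> real"

definition idx3 :: "nat \<Rightarrow> nat \<Rightarrow> bidx set" where
  "idx3 N M = {..<4} \<times> {..<N} \<times> {..<M}"

definition idm :: sqmat where
  "idm = (\<lambda>a b. if a = b then 1 else 0)"

definition diagm :: "(nat \<Rightarrow> real) \<Rightarrow> sqmat" where
  "diagm d = (\<lambda>a b. if a = b then d a else 0)"

definition kron3 :: "sqmat \<Rightarrow> sqmat \<Rightarrow> sqmat \<Rightarrow> bmat" where
  "kron3 C1 C2 C3 = (\<lambda>(k,i,j) (k',i',j'). C1 k k' * C2 i i' * C3 j j')"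

definition mmul :: "bidx set \<Rightarrow> bmat \<Rightarrow> bmat \<Rightarrow> bmat" where
  "mmul S A B = (\<lambda>r c. \<Sum>s\<in>S. A r s * B s c)"

definition mvec :: "bidx set \<Rightarrow> bmat \<Rightarrow> bvec \<Rightarrow> bvec" where
  "mvec S A v = (\<lambda>r. \<Sum>s\<in>S. A r s * v s)"

definition smul :: "real \<Rightarrow> bmat \<Rightarrow> bmat" where
  "smul c A = (\<lambda>r s. c * A r s)"

definition madd :: "bmat \<Rightarrow> bmat \<Rightarrow> bmat" where
  "madd A B = (\<lambda>r s. A r s + B r s)"

definition qform :: "bidx set \<Rightarrow> bvec \<Rightarrow> bmat \<Rightarrow> real" where
  "qform S v A = (\<Sum>r\<in>S. \<Sum>c\<in>S. v r * A r c * v c)"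

definition bnd :: "nat \<Rightarrow> sqmat" where
  "bnd n = (\<lambda>a b. if a = b \<and> a = 0 then -1 else if a = b \<and> a = n - 1 then 1 else 0)"

definition is_SBP :: "nat \<Rightarrow> sqmat \<Rightarrow> sqmat \<Rightarrow> sqmat \<Rightarrow> bool" where
  "is_SBP n D Pd Q \<longleftrightarrow>
     (\<forall>a<n. Pd a a > 0) \<and>
     (\<forall>a<n. \<forall>b<n. a \<noteq> b \<longrightarrow> Pd a b = 0) \<and>
     (\<forall>a<n. \<forall>b<n. Q a b + Q b a = bnd n a b) \<and>
     (\<forall>a<n. \<forall>b<n. D a b = Q a b / Pd a a)"

text \<open>Block matrix with (k,l) block diag(a_kl at the nodes), where the 4x4 matrix a
depends on the nodal values (phi_1..phi_4) = (Phi(0,i,j),...,Phi(3,i,j)).\<close>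
definition nodal :: "((nat \<Rightarrow> real) \<Rightarrow> sqmat) \<Rightarrow> bvec \<Rightarrow> bmat" where
  "nodal a Phi = (\<lambda>(k,i,j) (k',i',j').
      if i = i' \<and> j = j' then a (\<lambda>m. Phi (m,i,j)) k k' else 0)"

definition A1m :: "real \<Rightarrow> (nat \<Rightarrow> real) \<Rightarrow> sqmat" where
  "A1m \<gamma> \<phi> = (let u = \<phi> 1 / \<phi> 0 in
     (\<lambda>k l. (1/2) * ([[u,0,0,0],[0,u,0,0],[0,0,u,0],
                       [0, 2*(\<gamma>-1)*(\<phi> 3 / \<phi> 0), 0, (2-\<gamma>)*u]] ! k ! l)))"

definition A2m :: "real \<Rightarrow> (nat \<Rightarrow> real) \<Rightarrow> sqmat" where
  "A2m \<gamma> \<phi> = (let u = \<phi> 1 / \<phi> 0 in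
     (\<lambda>k l. (1/2) * ([[u,0,0,0],[0,u,0,4*(\<phi> 3 / \<phi> 0)],[0,0,u,0],
                       [0,0,0,(2-\<gamma>)*u]] ! k ! l)))"

definition B1m :: "real \<Rightarrow> (nat \<Rightarrow> real) \<Rightarrow> sqmat" where
  "B1m \<gamma> \<phi> = (let v = \<phi> 2 / \<phi> 0 in
     (\<lambda>k l. (1/2) * ([[v,0,0,0],[0,v,0,0],[0,0,v,0],
                       [0,0,2*(\<gamma>-1)*(\<phi> 3 / \<phi> 0),(2-\<gamma>)*v]] ! k ! l)))"

definition B2m :: "real \<Rightarrow> (nat \<Rightarrow> real) \<Rightarrow> sqmat" where
  "B2m \<gamma> \<phi> = (let v = \<phi> 2 / \<phi> 0 in
     (\<lambda>k l. (1/2) * ([[v,0,0,0],[0,v,0,0],[0,0,v,4*(\<phi> 3 / \<phi> 0)],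
                       [0,0,0,(2-\<gamma>)*v]] ! k ! l)))"

definition Pdiag :: "real \<Rightarrow> real \<Rightarrow> nat \<Rightarrow> real" where
  "Pdiag alpha2 \<gamma> k = [alpha2, (\<gamma>-1)/2, (\<gamma>-1)/2, 1] ! k"

end

theory Submission
  imports Defs
begin

lemma bnd_diag: "bnd n a b = (if a = b then bnd n a a else 0)"
  by (simp add: bnd_def)

lemma sbp_vec:
  assumes "is_SBP n D Pd Q"
  shows "(\<Sum>b<n. f b * (\<Sum>b'<n. Q b b' * g b')) + (\<Sum>b<n. g b * (\<Sum>b'<n. Q b b' * f b'))
       = (\<Sum>b<n. bnd n b b * f b * g b)"
proof -
  have Q: "\<And>x y. x < n \<Longrightarrow> y < n \<Longrightarrow> Q x y + Q y x = bnd n x y"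
    using assms by (simp add: is_SBP_def)
  have "(\<Sum>b<n. g b * (\<Sum>b'<n. Q b b' * f b')) = (\<Sum>b<n. \<Sum>b'<n. g b * Q b b' * f b')"
    by (simp add: sum_distrib_left mult.assoc)
  also have "\<dots> = (\<Sum>b'<n. \<Sum>b<n. g b * Q b b' * f b')" by (rule sum.swap)
  also have "\<dots> = (\<Sum>b<n. \<Sum>b'<n. f b * Q b' b * g b')" by (simp add: ac_simps)
  finally have 1: "(\<Sum>b<n. g b * (\<Sum>b'<n. Q b b' * f b')) = (\<Sum>b<n. \<Sum>b'<n. f b * Q b' b * g b')" .
  have 2: "(\<Sum>b<n. f b * (\<Sum>b'<n. Q b b' * g b')) = (\<Sum>b<n. \<Sum>b'<n. f b * Q b b' * g b')"
    by (simp add: sum_distrib_left mult.assoc)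
  have "(\<Sum>b<n. \<Sum>b'<n. f b * Q b b' * g b') + (\<Sum>b<n. \<Sum>b'<n. f b * Q b' b * g b')
     = (\<Sum>b<n. \<Sum>b'<n. f b * (Q b b' + Q b' b) * g b')"
    by (simp add: sum.distrib[symmetric] algebra_simps)
  also have "\<dots> = (\<Sum>b<n. \<Sum>b'<n. f b * bnd n b b' * g b')"
    by (intro sum.cong refl) (simp add: Q)
  also have "\<dots> = (\<Sum>b<n. \<Sum>b'<n. if b = b' then f b * bnd n b b * g b else 0)"
    by (intro sum.cong refl) (subst bnd_diag, simp)
  also have "\<dots> = (\<Sum>b<n. bnd n b b * f b * g b)"
    by (simp add: ac_simps)
  finally show ?thesis using 1 2 by simp
qed

lemma core1:
  assumes sbp: "is_SBP n D Pd Q"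
    and key: "\<And>k' b. k' < 4 \<Longrightarrow> b < n \<Longrightarrow> (\<Sum>k<4. p k * C k k' b * \<phi> k b) = p k' * F k' b"
  shows "(\<Sum>k<(4::nat). \<Sum>b<n. p k * w * Pd b b * \<phi> k b * ((\<Sum>b'<n. D b b' * F k b')
            + (\<Sum>k'<4. C k k' b * (\<Sum>b'<n. D b b' * \<phi> k' b'))))
       = (\<Sum>k<4. \<Sum>b<n. \<phi> k b * bnd n b b * w * p k * F k b)"
proof -
  have PdD: "\<And>b b'. b < n \<Longrightarrow> b' < n \<Longrightarrow> Pd b b * D b b' = Q b b'"
    using sbp unfolding is_SBP_def by (metis less_irrefl nonzero_mult_div_cancel_left times_divide_eq_right)
  define X2 where "X2 k' b = (\<Sum>b'<n. D b b' * \<phi> k' b')" for k' b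
  have PX1: "Pd b b * (\<Sum>b'<n. D b b' * F k b') = (\<Sum>b'<n. Q b b' * F k b')" if "b < n" for b k
    using PdD that by (simp add: sum_distrib_left mult.assoc[symmetric])
  have PX2: "Pd b b * X2 k b = (\<Sum>b'<n. Q b b' * \<phi> k b')" if "b < n" for b k
    using PdD that by (simp add: X2_def sum_distrib_left mult.assoc[symmetric])
  have split: "(\<Sum>k<(4::nat). \<Sum>b<n. p k * w * Pd b b * \<phi> k b * ((\<Sum>b'<n. D b b' * F k b')
            + (\<Sum>k'<4. C k k' b * (\<Sum>b'<n. D b b' * \<phi> k' b'))))
       = (\<Sum>k<(4::nat). \<Sum>b<n. p k * w * Pd b b * \<phi> k b * (\<Sum>b'<n. D b b' * F k b'))
         + (\<Sum>k<(4::nat). \<Sum>b<n. \<Sum>k'<4. p k * w * Pd b b * \<phi> k b * C k k' b * X2 k' b)"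
    by (simp add: X2_def sum.distrib[symmetric] distrib_left sum_distrib_left mult.assoc)
  have "(\<Sum>k<(4::nat). \<Sum>b<n. \<Sum>k'<4. p k * w * Pd b b * \<phi> k b * C k k' b * X2 k' b)
      = (\<Sum>b<n. \<Sum>k<(4::nat). \<Sum>k'<4. p k * w * Pd b b * \<phi> k b * C k k' b * X2 k' b)"
    by (rule sum.swap)
  also have "\<dots> = (\<Sum>b<n. \<Sum>k'<(4::nat). \<Sum>k<4. p k * w * Pd b b * \<phi> k b * C k k' b * X2 k' b)"
    by (rule sum.cong[OF refl], rule sum.swap)
  also have "\<dots> = (\<Sum>b<n. \<Sum>k'<(4::nat). w * Pd b b * X2 k' b * (\<Sum>k<4. p k * C k k' b * \<phi> k b))"
    by (intro sum.cong refl) (simp add: sum_distrib_left ac_simps)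
  also have "\<dots> = (\<Sum>b<n. \<Sum>k'<(4::nat). w * Pd b b * X2 k' b * (p k' * F k' b))"
    by (intro sum.cong refl) (simp add: key)
  also have "\<dots> = (\<Sum>k'<(4::nat). \<Sum>b<n. w * Pd b b * X2 k' b * (p k' * F k' b))"
    by (rule sum.swap)
  finally have T2: "(\<Sum>k<(4::nat). \<Sum>b<n. \<Sum>k'<4. p k * w * Pd b b * \<phi> k b * C k k' b * X2 k' b)
      = (\<Sum>k<(4::nat). w * p k * (\<Sum>b<n. F k b * (\<Sum>b'<n. Q b b' * \<phi> k b')))"
    apply (rule trans)
    apply (intro sum.cong refl)
    apply (simp add: sum_distrib_left)
    apply (intro sum.cong refl)
    subgoal for k b
      using PX2[of b k] by (simp add: sum_distrib_left[symmetric] mult.assoc[symmetric]) (simp add: ac_simps sum_distrib_left)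
    done
  have T1: "(\<Sum>k<(4::nat). \<Sum>b<n. p k * w * Pd b b * \<phi> k b * (\<Sum>b'<n. D b b' * F k b'))
     = (\<Sum>k<(4::nat). w * p k * (\<Sum>b<n. \<phi> k b * (\<Sum>b'<n. Q b b' * F k b')))"
    apply (intro sum.cong refl)
    apply (simp add: sum_distrib_left)
    apply (intro sum.cong refl)
    apply (simp add: PdD)
    done
  show ?thesis
    unfolding split T1 T2 sum.distrib[symmetric]
  proof (rule sum.cong[OF refl])
    fix k
    have "(\<Sum>b<n. \<phi> k b * (\<Sum>b'<n. Q b b' * F k b')) + (\<Sum>b<n. F k b * (\<Sum>b'<n. Q b b' * \<phi> k b'))
        = (\<Sum>b<n. bnd n b b * \<phi> k b * F k b)" (is "?A + ?B = _") by (rule sbp_vec[OF sbp])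
    then show "w * p k * (\<Sum>b<n. \<phi> k b * (\<Sum>b'<n. Q b b' * F k b')) + w * p k * (\<Sum>b<n. F k b * (\<Sum>b'<n. Q b b' * \<phi> k b'))
       = (\<Sum>b<n. \<phi> k b * bnd n b b * w * p k * F k b)"
      by (simp only: distrib_left[symmetric]) (simp add: sum_distrib_left ac_simps)
  qed
qed

lemma core:
  assumes sbp: "is_SBP n D Pd Q"
    and key: "\<And>k' a b. k' < 4 \<Longrightarrow> a < m \<Longrightarrow> b < n \<Longrightarrow> (\<Sum>k<4. p k * C k k' a b * \<phi> k a b) = p k' * F k' a b"
  shows "(\<Sum>k<(4::nat). \<Sum>a<m. \<Sum>b<n. p k * w a * Pd b b * \<phi> k a b * ((\<Sum>b'<n. D b b' * F k a b')
            + (\<Sum>k'<4. C k k' a b * (\<Sum>b'<n. D b b' * \<phi> k' a b'))))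
       = (\<Sum>k<4. \<Sum>a<m. \<Sum>b<n. \<phi> k a b * bnd n b b * w a * p k * F k a b)"
proof -
  have "(\<Sum>k<(4::nat). \<Sum>a<m. \<Sum>b<n. p k * w a * Pd b b * \<phi> k a b * ((\<Sum>b'<n. D b b' * F k a b')
            + (\<Sum>k'<4. C k k' a b * (\<Sum>b'<n. D b b' * \<phi> k' a b'))))
     = (\<Sum>a<m. \<Sum>k<(4::nat). \<Sum>b<n. p k * w a * Pd b b * \<phi> k a b * ((\<Sum>b'<n. D b b' * F k a b')
            + (\<Sum>k'<4. C k k' a b * (\<Sum>b'<n. D b b' * \<phi> k' a b'))))"
    by (rule sum.swap)
  also have "\<dots> = (\<Sum>a<m. \<Sum>k<4. \<Sum>b<n. \<phi> k a b * bnd n b b * w a * p k * F k a b)"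
  proof (rule sum.cong[OF refl])
    fix a assume "a \<in> {..<m}"
    then show "(\<Sum>k<(4::nat). \<Sum>b<n. p k * w a * Pd b b * \<phi> k a b * ((\<Sum>b'<n. D b b' * F k a b')
            + (\<Sum>k'<4. C k k' a b * (\<Sum>b'<n. D b b' * \<phi> k' a b'))))
       = (\<Sum>k<4. \<Sum>b<n. \<phi> k a b * bnd n b b * w a * p k * F k a b)"
      using core1[OF sbp, of p "\<lambda>k k' b. C k k' a b" "\<lambda>k b. \<phi> k a b" "\<lambda>k b. F k a b" "w a"] key
      by simp
  qed
  also have "\<dots> = (\<Sum>k<4. \<Sum>a<m. \<Sum>b<n. \<phi> k a b * bnd n b b * w a * p k * F k a b)"
    by (rule sum.swap)
  finally show ?thesis .
qed

lemma four: "{..<4::nat} = {0,1,2,3}" by auto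

lemma keyA: "k' < 4 \<Longrightarrow> (\<Sum>k<4. Pdiag alpha2 \<gamma> k * A2m \<gamma> \<psi> k k' * \<psi> k)
   = Pdiag alpha2 \<gamma> k' * (\<Sum>k''<4. A1m \<gamma> \<psi> k' k'' * \<psi> k'')"
proof -
  assume "k' < 4"
  then have "k' = 0 \<or> k' = 1 \<or> k' = 2 \<or> k' = 3" by auto
  then show ?thesis
    unfolding four
    by (elim disjE; cases "\<psi> 0 = 0") (simp_all add: Pdiag_def A1m_def A2m_def Let_def field_simps)
qed

lemma keyB: "k' < 4 \<Longrightarrow> (\<Sum>k<4. Pdiag alpha2 \<gamma> k * B2m \<gamma> \<psi> k k' * \<psi> k)
   = Pdiag alpha2 \<gamma> k' * (\<Sum>k''<4. B1m \<gamma> \<psi> k' k'' * \<psi> k'')"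
proof -
  assume "k' < 4"
  then have "k' = 0 \<or> k' = 1 \<or> k' = 2 \<or> k' = 3" by auto
  then show ?thesis
    unfolding four
    by (elim disjE; cases "\<psi> 0 = 0") (simp_all add: Pdiag_def B1m_def B2m_def Let_def field_simps)
qed

lemma mif1: "(if P then 1 else 0) * (x::real) = (if P then x else 0)" by simp
lemma mif2: "(x::real) * (if P then 1 else 0) = (if P then x else 0)" by simp
lemma mif3: "(if P then x else 0) * (y::real) = (if P then x * y else 0)" by simp
lemma mif4: "(x::real) * (if P then y else 0) = (if P then x * y else 0)" by simp
lemma sif: "(\<Sum>x\<in>A. if P then f x else (0::real)) = (if P then (\<Sum>x\<in>A. f x) else 0)" by simp
lemma ifconj: "(if P \<and> Q then x else (0::real)) = (if P then if Q then x else 0 else 0)" by simp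
lemmas delta_simps = mif1 mif2 mif3 mif4 sif ifconj

lemma sum_idx3: "sum g (idx3 N M) = (\<Sum>k<4. \<Sum>i<N. \<Sum>j<M. g (k,i,j))"
  unfolding idx3_def by (simp add: sum.cartesian_product)

lemma E1: "k < 4 \<Longrightarrow> j < M \<Longrightarrow>
  mvec (idx3 N M) (kron3 idm D idm) v (k,i,j) = (\<Sum>i'<N. D i i' * v(k,i',j))"
  unfolding mvec_def sum_idx3 by (simp add: kron3_def idm_def delta_simps)

lemma E2: "k < 4 \<Longrightarrow> i < N \<Longrightarrow>
  mvec (idx3 N M) (kron3 idm idm D) v (k,i,j) = (\<Sum>j'<M. D j j' * v(k,i,j'))"
  unfolding mvec_def sum_idx3 by (simp add: kron3_def idm_def delta_simps)

lemma E3: "i < N \<Longrightarrow> j < M \<Longrightarrow>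
  mvec (idx3 N M) (nodal A \<phi>) v (k,i,j) = (\<Sum>k'<4. A (\<lambda>m. \<phi>(m,i,j)) k k' * v(k',i,j))"
  unfolding mvec_def sum_idx3 by (simp add: nodal_def delta_simps)

lemma mmul_delta:
  assumes "r \<in> S" "finite S" "\<And>s. s \<in> S \<Longrightarrow> A r s = (if s = r then c else 0)"
  shows "mmul S A B r x = c * B r x"
proof -
  have "mmul S A B r x = (\<Sum>s\<in>S. if s = r then c * B s x else 0)"
    unfolding mmul_def by (rule sum.cong) (auto simp: assms(3))
  also have "\<dots> = c * B r x" using assms(1,2) by simp
  finally show ?thesis .
qed

lemma kdiag: "kron3 (diagm d) idm idm (k,i,j) s = (if s = (k,i,j) then d k else 0)"
  by (cases s) (auto simp: kron3_def diagm_def idm_def)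

lemma kPP:
  assumes "\<forall>a<N. \<forall>b<N. a \<noteq> b \<longrightarrow> Px a b = 0" "\<forall>a<M. \<forall>b<M. a \<noteq> b \<longrightarrow> Py a b = 0"
    "i < N" "j < M" "s \<in> idx3 N M"
  shows "kron3 idm Px Py (k,i,j) s = (if s = (k,i,j) then Px i i * Py j j else 0)"
  using assms by (cases s) (auto simp: kron3_def idm_def idx3_def)

lemma kbP:
  assumes "\<forall>a<M. \<forall>b<M. a \<noteq> b \<longrightarrow> Py a b = 0"
    "j < M" "s \<in> idx3 N M"
  shows "kron3 idm (bnd N) Py (k,i,j) s = (if s = (k,i,j) then bnd N i i * Py j j else 0)"
  using assms by (cases s) (auto simp: kron3_def idm_def idx3_def bnd_def)

lemma kPb:
  assumes "\<forall>a<N. \<forall>b<N. a \<noteq> b \<longrightarrow> Px a b = 0"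
    "i < N" "s \<in> idx3 N M"
  shows "kron3 idm Px (bnd M) (k,i,j) s = (if s = (k,i,j) then Px i i * bnd M j j else 0)"
  using assms by (cases s) (auto simp: kron3_def idm_def idx3_def bnd_def)

lemma fin_idx3: "finite (idx3 N M)" by (simp add: idx3_def)

lemma idx3_mem: "(k,i,j) \<in> idx3 N M \<longleftrightarrow> k < 4 \<and> i < N \<and> j < M" by (simp add: idx3_def)

theorem mainTheorem3:
  fixes \<gamma> alpha2 a b :: real and N M :: nat
    and Dx Px Qx Dy Py Qy :: sqmat
    and Phi Phi' :: "real \<Rightarrow> bvec"
  assumes gam: "\<gamma> > 1" and alpha: "alpha2 > 0"
    and NM: "N \<ge> 2" "M \<ge> 2"
    and sbpx: "is_SBP N Dx Px Qx" and sbpy: "is_SBP M Dy Py Qy"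
    and ab: "a < b"
    and nz: "\<And>t i j. t \<in> {a<..<b} \<Longrightarrow> i < N \<Longrightarrow> j < M \<Longrightarrow> Phi t (0,i,j) \<noteq> 0"
    and diff: "\<And>t r. t \<in> {a<..<b} \<Longrightarrow> r \<in> idx3 N M \<Longrightarrow>
                 ((\<lambda>s. Phi s r) has_real_derivative Phi' t r) (at t)"
    and scheme: "\<And>t r. t \<in> {a<..<b} \<Longrightarrow> r \<in> idx3 N M \<Longrightarrow>
        Phi' t r
        + mvec (idx3 N M) (kron3 idm Dx idm) (mvec (idx3 N M) (nodal (A1m \<gamma>) (Phi t)) (Phi t)) r
        + mvec (idx3 N M) (nodal (A2m \<gamma>) (Phi t)) (mvec (idx3 N M) (kron3 idm Dx idm) (Phi t)) r
        + mvec (idx3 N M) (kron3 idm idm Dy) (mvec (idx3 N M) (nodal (B1m \<gamma>) (Phi t)) (Phi t)) r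
        + mvec (idx3 N M) (nodal (B2m \<gamma>) (Phi t)) (mvec (idx3 N M) (kron3 idm idm Dy) (Phi t)) r
        = 0"
  shows "\<forall>t \<in> {a<..<b}.
     ((\<lambda>s. qform (idx3 N M) (Phi s)
              (mmul (idx3 N M) (kron3 (diagm (Pdiag alpha2 \<gamma>)) idm idm) (kron3 idm Px Py)))
       has_real_derivative
       (- qform (idx3 N M) (Phi t)
            (madd
              (mmul (idx3 N M) (kron3 idm (bnd N) Py)
                 (smul 2 (mmul (idx3 N M) (kron3 (diagm (Pdiag alpha2 \<gamma>)) idm idm) (nodal (A1m \<gamma>) (Phi t)))))
              (mmul (idx3 N M) (kron3 idm Px (bnd M))
                 (smul 2 (mmul (idx3 N M) (kron3 (diagm (Pdiag alpha2 \<gamma>)) idm idm) (nodal (B1m \<gamma>) (Phi t)))))))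
     ) (at t)"
proof
  fix t assume t: "t \<in> {a<..<b}"
  define S where "S = idx3 N M"
  define \<phi> where "\<phi> = Phi t"
  define \<phi>' where "\<phi>' = Phi' t"
  define p where "p = Pdiag alpha2 \<gamma>"
  define F where "F k i j = (\<Sum>k'<4. A1m \<gamma> (\<lambda>m. \<phi>(m,i,j)) k k' * \<phi>(k',i,j))" for k i j
  define G where "G k i j = (\<Sum>k'<4. B1m \<gamma> (\<lambda>m. \<phi>(m,i,j)) k k' * \<phi>(k',i,j))" for k i j
  have Pxoff: "\<forall>a<N. \<forall>b<N. a \<noteq> b \<longrightarrow> Px a b = 0" using sbpx by (simp add: is_SBP_def)
  have Pyoff: "\<forall>a<M. \<forall>b<M. a \<noteq> b \<longrightarrow> Py a b = 0" using sbpy by (simp add: is_SBP_def)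
  have finS: "finite S" by (simp add: S_def fin_idx3)
  let ?W = "mmul (idx3 N M) (kron3 (diagm (Pdiag alpha2 \<gamma>)) idm idm) (kron3 idm Px Py)"
  have W: "?W (k,i,j) c = (if c = (k,i,j) then p k * (Px i i * Py j j) else 0)"
    if "(k,i,j) \<in> S" "c \<in> S" for k i j c
  proof -
    have "?W (k,i,j) c = p k * kron3 idm Px Py (k,i,j) c"
      by (rule mmul_delta) (use that in \<open>auto simp: S_def fin_idx3 kdiag p_def\<close>)
    also have "\<dots> = (if c = (k,i,j) then p k * (Px i i * Py j j) else 0)"
      using kPP[OF Pxoff Pyoff, of i j c k] that by (simp add: S_def idx3_mem)
    finally show ?thesis .
  qed
  have deriv: "((\<lambda>s. qform (idx3 N M) (Phi s) ?W) has_real_derivative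
      (\<Sum>r\<in>S. \<Sum>c\<in>S. \<phi>' r * ?W r c * \<phi> c + \<phi> r * ?W r c * \<phi>' c)) (at t)"
    unfolding qform_def S_def
  proof (intro DERIV_sum)
    fix r c assume r: "r \<in> idx3 N M" and c: "c \<in> idx3 N M"
    show "((\<lambda>s. Phi s r * ?W r c * Phi s c) has_real_derivative (\<phi>' r * ?W r c * \<phi> c + \<phi> r * ?W r c * \<phi>' c)) (at t)"
      using DERIV_mult[OF DERIV_mult[OF diff[OF t r] DERIV_const[of "?W r c"]] diff[OF t c]]
      by (simp add: \<phi>_def \<phi>'_def ac_simps)
  qed
  show "((\<lambda>s. qform (idx3 N M) (Phi s) ?W) has_real_derivative
       (- qform (idx3 N M) (Phi t)
            (madd
              (mmul (idx3 N M) (kron3 idm (bnd N) Py)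
                 (smul 2 (mmul (idx3 N M) (kron3 (diagm (Pdiag alpha2 \<gamma>)) idm idm) (nodal (A1m \<gamma>) (Phi t)))))
              (mmul (idx3 N M) (kron3 idm Px (bnd M))
                 (smul 2 (mmul (idx3 N M) (kron3 (diagm (Pdiag alpha2 \<gamma>)) idm idm) (nodal (B1m \<gamma>) (Phi t)))))))
     ) (at t)"
  proof (rule DERIV_cong[OF deriv])
    show "(\<Sum>r\<in>S. \<Sum>c\<in>S. \<phi>' r * ?W r c * \<phi> c + \<phi> r * ?W r c * \<phi>' c) = 
       (- qform (idx3 N M) (Phi t)
            (madd
              (mmul (idx3 N M) (kron3 idm (bnd N) Py)
                 (smul 2 (mmul (idx3 N M) (kron3 (diagm (Pdiag alpha2 \<gamma>)) idm idm) (nodal (A1m \<gamma>) (Phi t)))))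
              (mmul (idx3 N M) (kron3 idm Px (bnd M))
                 (smul 2 (mmul (idx3 N M) (kron3 (diagm (Pdiag alpha2 \<gamma>)) idm idm) (nodal (B1m \<gamma>) (Phi t)))))))"
    proof -
      define TX where "TX k i j = (\<Sum>i'<N. Dx i i' * F k i' j) + (\<Sum>k'<4. A2m \<gamma> (\<lambda>m. \<phi>(m,i,j)) k k' * (\<Sum>i'<N. Dx i i' * \<phi>(k',i',j)))" for k i j
      define TY where "TY k i j = (\<Sum>j'<M. Dy j j' * G k i j') + (\<Sum>k'<4. B2m \<gamma> (\<lambda>m. \<phi>(m,i,j)) k k' * (\<Sum>j'<M. Dy j j' * \<phi>(k',i,j')))" for k i j
      have L: "(\<Sum>r\<in>S. \<Sum>c\<in>S. \<phi>' r * ?W r c * \<phi> c + \<phi> r * ?W r c * \<phi>' c)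
          = (\<Sum>r\<in>S. case r of (k,i,j) \<Rightarrow> 2 * (p k * Px i i * Py j j * \<phi>(k,i,j) * \<phi>'(k,i,j)))"
      proof (rule sum.cong[OF refl])
        fix r assume r: "r \<in> S"
        obtain k i j where rr: "r = (k,i,j)" by (cases r)
        have "(\<Sum>c\<in>S. \<phi>' r * ?W r c * \<phi> c + \<phi> r * ?W r c * \<phi>' c)
            = (\<Sum>c\<in>S. if c = r then 2 * (p k * Px i i * Py j j * \<phi>(k,i,j) * \<phi>'(k,i,j)) else 0)"
          by (rule sum.cong[OF refl]) (use r in \<open>simp add: rr W\<close>)
        also have "\<dots> = 2 * (p k * Px i i * Py j j * \<phi>(k,i,j) * \<phi>'(k,i,j))"
          using r finS by simp
        finally show "(\<Sum>c\<in>S. \<phi>' r * ?W r c * \<phi> c + \<phi> r * ?W r c * \<phi>' c)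
          = (case r of (k,i,j) \<Rightarrow> 2 * (p k * Px i i * Py j j * \<phi>(k,i,j) * \<phi>'(k,i,j)))"
          by (simp add: rr)
      qed
      also have "\<dots> = (\<Sum>k<4. \<Sum>i<N. \<Sum>j<M. 2 * (p k * Px i i * Py j j * \<phi>(k,i,j) * \<phi>'(k,i,j)))"
        by (simp add: S_def sum_idx3)
      also have "\<dots> = (\<Sum>k<4. \<Sum>i<N. \<Sum>j<M. 2 * (p k * Px i i * Py j j * \<phi>(k,i,j) * (-(TX k i j + TY k i j))))"
      proof (intro sum.cong refl)
        fix k i j assume k: "k \<in> {..<4::nat}" and i: "i \<in> {..<N}" and j: "j \<in> {..<M}"
        have "\<phi>'(k,i,j) = -(TX k i j + TY k i j)"
          using scheme[OF t, of "(k,i,j)"] k i j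
          by (simp add: idx3_mem E1 E2 E3 \<phi>_def[symmetric] \<phi>'_def[symmetric] TX_def TY_def F_def G_def
              algebra_simps)
        then show "2 * (p k * Px i i * Py j j * \<phi>(k,i,j) * \<phi>'(k,i,j)) = 2 * (p k * Px i i * Py j j * \<phi>(k,i,j) * (-(TX k i j + TY k i j)))"
          by simp
      qed
      finally have LL: "(\<Sum>r\<in>S. \<Sum>c\<in>S. \<phi>' r * ?W r c * \<phi> c + \<phi> r * ?W r c * \<phi>' c)
          = (\<Sum>k<4. \<Sum>i<N. \<Sum>j<M. 2 * (p k * Px i i * Py j j * \<phi>(k,i,j) * (-(TX k i j + TY k i j))))" .
      let ?Z1 = "mmul (idx3 N M) (kron3 (diagm (Pdiag alpha2 \<gamma>)) idm idm) (nodal (A1m \<gamma>) (Phi t))"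
      let ?Z2 = "mmul (idx3 N M) (kron3 (diagm (Pdiag alpha2 \<gamma>)) idm idm) (nodal (B1m \<gamma>) (Phi t))"
      let ?X = "mmul (idx3 N M) (kron3 idm (bnd N) Py) (smul 2 ?Z1)"
      let ?Y = "mmul (idx3 N M) (kron3 idm Px (bnd M)) (smul 2 ?Z2)"
      have X: "?X (k,i,j) c = bnd N i i * Py j j * (2 * (p k * nodal (A1m \<gamma>) \<phi> (k,i,j) c))"
        if "(k,i,j) \<in> S" for k i j c
      proof -
        have x1: "?X (k,i,j) c = bnd N i i * Py j j * smul 2 ?Z1 (k,i,j) c"
          by (rule mmul_delta) (use that kbP[OF Pyoff] in \<open>auto simp: S_def fin_idx3 idx3_mem\<close>)
        have x2: "?Z1 (k,i,j) c = p k * nodal (A1m \<gamma>) (Phi t) (k,i,j) c"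
          by (rule mmul_delta) (use that in \<open>auto simp: S_def fin_idx3 kdiag p_def \<phi>_def\<close>)
        show ?thesis by (simp only: x1) (simp add: smul_def x2 \<phi>_def)
      qed
      have Y: "?Y (k,i,j) c = Px i i * bnd M j j * (2 * (p k * nodal (B1m \<gamma>) \<phi> (k,i,j) c))"
        if "(k,i,j) \<in> S" for k i j c
      proof -
        have x1: "?Y (k,i,j) c = Px i i * bnd M j j * smul 2 ?Z2 (k,i,j) c"
          by (rule mmul_delta) (use that kPb[OF Pxoff] in \<open>auto simp: S_def fin_idx3 idx3_mem\<close>)
        have x2: "?Z2 (k,i,j) c = p k * nodal (B1m \<gamma>) (Phi t) (k,i,j) c"
          by (rule mmul_delta) (use that in \<open>auto simp: S_def fin_idx3 kdiag p_def \<phi>_def\<close>)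
        show ?thesis by (simp only: x1) (simp add: smul_def x2 \<phi>_def)
      qed
      have "qform (idx3 N M) (Phi t) (madd ?X ?Y) = (\<Sum>r\<in>S. \<Sum>c\<in>S. \<phi> r * madd ?X ?Y r c * \<phi> c)"
        by (simp only: qform_def S_def \<phi>_def)
      also have "\<dots> 
          = (\<Sum>r\<in>S. case r of (k,i,j) \<Rightarrow> 2 * (\<phi>(k,i,j) * (bnd N i i * Py j j * p k * F k i j + Px i i * bnd M j j * p k * G k i j)))"
      proof (rule sum.cong[OF refl])
        fix r assume r: "r \<in> S"
        obtain k i j where rr: "r = (k,i,j)" by (cases r)
        have "(\<Sum>c\<in>S. \<phi> r * madd ?X ?Y r c * \<phi> c)
           = 2 * (\<phi>(k,i,j) * (bnd N i i * Py j j * p k * mvec S (nodal (A1m \<gamma>) \<phi>) \<phi> (k,i,j)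
                + Px i i * bnd M j j * p k * mvec S (nodal (B1m \<gamma>) \<phi>) \<phi> (k,i,j)))"
          using r unfolding rr madd_def mvec_def
          by (simp add: X Y sum_distrib_left sum.distrib algebra_simps)
        also have "\<dots> = 2 * (\<phi>(k,i,j) * (bnd N i i * Py j j * p k * F k i j + Px i i * bnd M j j * p k * G k i j))"
          using r by (simp add: rr S_def idx3_mem E3 F_def G_def)
        finally show "(\<Sum>c\<in>S. \<phi> r * madd ?X ?Y r c * \<phi> c)
          = (case r of (k,i,j) \<Rightarrow> 2 * (\<phi>(k,i,j) * (bnd N i i * Py j j * p k * F k i j + Px i i * bnd M j j * p k * G k i j)))"
          by (simp add: rr)
      qed
      also have "\<dots> = (\<Sum>k<4. \<Sum>i<N. \<Sum>j<M. 2 * (\<phi>(k,i,j) * (bnd N i i * Py j j * p k * F k i j + Px i i * bnd M j j * p k * G k i j)))"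
        by (simp add: S_def sum_idx3)
      finally have RR: "qform (idx3 N M) (Phi t) (madd ?X ?Y) = (\<Sum>k<4. \<Sum>i<N. \<Sum>j<M. 2 * (\<phi>(k,i,j) * (bnd N i i * Py j j * p k * F k i j + Px i i * bnd M j j * p k * G k i j)))" .
      have sw: "\<And>f. (\<Sum>k<(4::nat). \<Sum>i<N. \<Sum>j<M. f k i j) = (\<Sum>k<4. \<Sum>j<M. \<Sum>i<N. f k i j)"
        by (rule sum.cong[OF refl], rule sum.swap)
      have CX0: "(\<Sum>k<4. \<Sum>j<M. \<Sum>i<N. p k * Py j j * Px i i * \<phi>(k,i,j) * ((\<Sum>i'<N. Dx i i' * F k i' j)
            + (\<Sum>k'<4. A2m \<gamma> (\<lambda>m. \<phi>(m,i,j)) k k' * (\<Sum>i'<N. Dx i i' * \<phi>(k',i',j)))))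
          = (\<Sum>k<4. \<Sum>j<M. \<Sum>i<N. \<phi>(k,i,j) * bnd N i i * Py j j * p k * F k i j)"
        by (rule core[OF sbpx, of M p "\<lambda>k k' j i. A2m \<gamma> (\<lambda>m. \<phi>(m,i,j)) k k'" "\<lambda>k j i. \<phi>(k,i,j)" "\<lambda>k j i. F k i j" "\<lambda>j. Py j j"])
           (simp add: keyA p_def F_def)
      have CX: "(\<Sum>k<4. \<Sum>i<N. \<Sum>j<M. p k * Px i i * Py j j * \<phi>(k,i,j) * TX k i j)
          = (\<Sum>k<4. \<Sum>i<N. \<Sum>j<M. \<phi>(k,i,j) * bnd N i i * Py j j * p k * F k i j)"
        unfolding sw using CX0 by (simp add: TX_def ac_simps)
      have CY: "(\<Sum>k<4. \<Sum>i<N. \<Sum>j<M. p k * Px i i * Py j j * \<phi>(k,i,j) * TY k i j)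
          = (\<Sum>k<4. \<Sum>i<N. \<Sum>j<M. \<phi>(k,i,j) * bnd M j j * Px i i * p k * G k i j)"
        unfolding TY_def
        by (rule core[OF sbpy, of N p "\<lambda>k k' i j. B2m \<gamma> (\<lambda>m. \<phi>(m,i,j)) k k'" "\<lambda>k i j. \<phi>(k,i,j)" "\<lambda>k i j. G k i j" "\<lambda>i. Px i i"])
           (simp add: keyB p_def G_def)
      have "(\<Sum>k<4. \<Sum>i<N. \<Sum>j<M. 2 * (p k * Px i i * Py j j * \<phi>(k,i,j) * (-(TX k i j + TY k i j))))
          = -2 * (\<Sum>k<4. \<Sum>i<N. \<Sum>j<M. p k * Px i i * Py j j * \<phi>(k,i,j) * TX k i j)
            - 2 * (\<Sum>k<4. \<Sum>i<N. \<Sum>j<M. p k * Px i i * Py j j * \<phi>(k,i,j) * TY k i j)"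
        by (simp add: sum_distrib_left sum.distrib[symmetric] sum_subtractf[symmetric] algebra_simps)
      also have "\<dots> = -2 * (\<Sum>k<4. \<Sum>i<N. \<Sum>j<M. \<phi>(k,i,j) * bnd N i i * Py j j * p k * F k i j)
            - 2 * (\<Sum>k<4. \<Sum>i<N. \<Sum>j<M. \<phi>(k,i,j) * bnd M j j * Px i i * p k * G k i j)"
        by (simp only: CX CY)
      also have "\<dots> = - (\<Sum>k<4. \<Sum>i<N. \<Sum>j<M. 2 * (\<phi>(k,i,j) * (bnd N i i * Py j j * p k * F k i j + Px i i * bnd M j j * p k * G k i j)))"
      proof -
        have "(\<Sum>k<4. \<Sum>i<N. \<Sum>j<M. 2 * (\<phi>(k,i,j) * (bnd N i i * Py j j * p k * F k i j + Px i i * bnd M j j * p k * G k i j)))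
          = 2 * (\<Sum>k<4. \<Sum>i<N. \<Sum>j<M. \<phi>(k,i,j) * bnd N i i * Py j j * p k * F k i j)
            + 2 * (\<Sum>k<4. \<Sum>i<N. \<Sum>j<M. \<phi>(k,i,j) * bnd M j j * Px i i * p k * G k i j)"
          by (simp add: sum_distrib_left sum.distrib algebra_simps)
        then show ?thesis by linarith
      qed
      finally show ?thesis using LL RR by simp
    qed
  qed
qed

end
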